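(* Let $K$ be a field and $E$ a row-finite graph with a fixed choice of special edges. Let $x=x_1\dots x_m$ ($m\ge 1$) be a cycle in $E$ all of whose edges are special and which has an exit. Let $(F_x,\phi_x)$ be the extended representation graph associated to $x$ (regarded as a closed path in $E_d$ consisting only of real edges), and let $W=W(F_x,\phi_x)$ be the associated right $L(E)$-module. Then $W$ is not a simple $L(E)$-module, and $\operatorname{End}_{L(E)}(W)\cong K$ as rings.
   Context: Let $E=(E^0,E^1,s,r)$ be a row-finite directed graph (no vertex emits infinitely many edges). A vertex is regular if it emits at least one edge. For every regular vertex $v$ a fixed edge $e^v\in s^{-1}(v)$ is chosen; these edges are called special, all other edges nonspecial. A path of length $n\ge 1$ is a word $y_1\dots y_n$ of edges with $r(y_i)=s(y_{i+1})$; a path of length $0$ is a vertex $v$ with $s(v)=r(v)=v$. A cycle is a path $x_1\dots x_m$ of length $\ge1$ with $s(x_1)=r(x_m)$ and $s(x_i)\ne s(x_j)$ for $i\neq j$; an exit of it is an edge $e$ with $s(e)=s(x_i)$ and $e\ne x_i$ for some $i$. The double graph $E_d$ has vertex set $E^0$ and edges $\{e,e^*: e\in E^1\}$ with $s_d(e)=s(e)$, $r_d(e)=r(e)$, $s_d(e^* )=r(e)$, $r_d(e^* )=s(e)$; the $e$ are real edges, the $e^*$ ghost edges. For a path $p=e_1\dots e_n$ in $E$ set $p^*=e_n^*\dots e_1^*$. The set $X$ of basis paths consists of the following paths in $E_d$: all vertices $v\in E^0$; all $p$ and $p^*$ with $p$ a path of length $\ge1$ in $E$; all $pq^*$ with $p=e_1\dots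 e_k$, $q=f_1\dots f_n$ paths of length $\ge 1$ in $E$, $r(p)=r(q)$, and either $e_k\ne f_n$ or $e_k=f_n$ nonspecial. The Leavitt path algebra $L(E)$ is the $K$-algebra generated by $\{v,e,e^*: v\in E^0,e\in E^1\}$ subject to $uv=\delta_{uv}u$; $s(e)e=e=er(e)$, $r(e)e^*=e^*=e^*s(e)$; $e^*f=\delta_{ef}r(e)$; and $\sum_{e\in s^{-1}(v)}ee^*=v$ for every regular $v$. For $x=x_1\dots x_m$ a closed path of length $\ge1$ in $E_d$ consisting only of real edges (or only of ghost edges), and $1\le i\le m$, let $X_i$ be the set of basis paths $y=y_1\dots y_n$ of length $n\ge 1$ such that $x_iy_1$ is a basis path and $y_1\ne x_{i+1}$ (with $x_{m+1}=x_1$). The graph $F_x$ has vertices $w_i$ ($1\le i\le m$) and $w_{i,y}$ ($1\le i\le m$, $y\in X_i$), all distinct, and edges $f_i$ from $w_{i-1}$ to $w_i$ (with $w_0=w_m$) and $f_{i,y}$ with range $w_{i,y}$ and source $w_i$ if $|y|=1$, resp. $w_{i,y_1\dots y_{n-1}}$ if $y=y_1\dots y_n$, $n\ge2$. The homomorphism $\phi_x:F_x\to E_d$ is given by $\phi_x(w_i)=r_d(x_i)$, $\phi_x(w_{i,y})=r_d(y)$, $\phi_x(f_i)=x_i$, $\phi_x(f_{i,y})=$ the last edge of $y$. For such a pair $(F,\phi)$ (a graph $F$ with a graph homomorphism $\phi:F\to E_d$), $W(F,\phi)$ is the $K$-vector space with basis $F^0$, made into a right $L(E)$-module by the following action on basis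 vertices $w\in F^0$ (for $v\in E^0$, $e\in E^1$): $w.v=w$ if $\phi(w)=v$ and $0$ otherwise; $w.e=r(f)$ if some $f\in s^{-1}(w)$ has $\phi(f)=e$, $w.e=s(f)$ if some $f\in r^{-1}(w)$ has $\phi(f)=e^*$, and $w.e=0$ otherwise; $w.e^*=r(f)$ if some $f\in s^{-1}(w)$ has $\phi(f)=e^*$, $w.e^*=s(f)-T$ if $e$ is special and some $f\in r^{-1}(w)$ has $\phi(f)=e$, where $T=\sum r(p)$ over all paths $p$ in $F$ starting at $s(f)$ with $\phi(p)=dd^*$ for some $d\in s^{-1}(s(e))\setminus\{e\}$, and $w.e^*=0$ otherwise. (This extends uniquely to a right $L(E)$-module structure.) *)

theory Defs
  imports Main "HOL-Library.Function_Algebras"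
begin

record ('v,'e) dgraph =
  verts :: "'v set"
  edges :: "'e set"
  src   :: "'e \<Rightarrow> 'v"
  rng   :: "'e \<Rightarrow> 'v"

definition wf_graph :: "('v,'e) dgraph \<Rightarrow> bool" where
  "wf_graph E \<longleftrightarrow> (\<forall>e\<in>edges E. src E e \<in> verts E \<and> rng E e \<in> verts E)"

definition row_finite :: "('v,'e) dgraph \<Rightarrow> bool" where
  "row_finite E \<longleftrightarrow> (\<forall>v\<in>verts E. finite {e\<in>edges E. src E e = v})"

definition regular :: "('v,'e) dgraph \<Rightarrow> 'v \<Rightarrow> bool" where
  "regular E v \<longleftrightarrow> v \<in> verts E \<and> (\<exists>e\<in>edges E. src E e = v)"

definition special_choice :: "('v,'e) dgraph \<Rightarrow> ('v \<Rightarrow> 'e) \<Rightarrow> bool" where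
  "special_choice E sp \<longleftrightarrow>
     (\<forall>v. regular E v \<longrightarrow> sp v \<in> edges E \<and> src E (sp v) = v)"

definition special :: "('v,'e) dgraph \<Rightarrow> ('v \<Rightarrow> 'e) \<Rightarrow> 'e \<Rightarrow> bool" where
  "special E sp e \<longleftrightarrow> e \<in> edges E \<and> sp (src E e) = e"

definition is_cycle :: "('v,'e) dgraph \<Rightarrow> 'e list \<Rightarrow> bool" where
  "is_cycle E x \<longleftrightarrow> x \<noteq> [] \<and> set x \<subseteq> edges E
     \<and> (\<forall>j. Suc j < length x \<longrightarrow> rng E (x!j) = src E (x!Suc j))
     \<and> src E (hd x) = rng E (last x)
     \<and> inj_on (\<lambda>j. src E (x!j)) {..<length x}"

definition has_exit :: "('v,'e) dgraph \<Rightarrow> 'e list \<Rightarrow> bool" where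
  "has_exit E x \<longleftrightarrow> (\<exists>e\<in>edges E. \<exists>i<length x. src E e = src E (x!i) \<and> e \<noteq> x!i)"

datatype 'e dedge = Real 'e | Ghost 'e

fun d_src :: "('v,'e) dgraph \<Rightarrow> 'e dedge \<Rightarrow> 'v" where
  "d_src E (Real e) = src E e"
| "d_src E (Ghost e) = rng E e"

fun d_rng :: "('v,'e) dgraph \<Rightarrow> 'e dedge \<Rightarrow> 'v" where
  "d_rng E (Real e) = rng E e"
| "d_rng E (Ghost e) = src E e"

fun d_base :: "'e dedge \<Rightarrow> 'e" where
  "d_base (Real e) = e"
| "d_base (Ghost e) = e"

definition d_path :: "('v,'e) dgraph \<Rightarrow> 'e dedge list \<Rightarrow> bool" where
  "d_path E ys \<longleftrightarrow> ys \<noteq> [] \<and> (\<forall>y\<in>set ys. d_base y \<in> edges E)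
     \<and> (\<forall>j. Suc j < length ys \<longrightarrow> d_rng E (ys!j) = d_src E (ys!Suc j))"

definition basis_path :: "('v,'e) dgraph \<Rightarrow> ('v \<Rightarrow> 'e) \<Rightarrow> 'e dedge list \<Rightarrow> bool" where
  "basis_path E sp ys \<longleftrightarrow> d_path E ys \<and>
     (\<exists>p q. ys = map Real p @ map Ghost (rev q) \<and>
        (p = [] \<or> q = [] \<or> last p \<noteq> last q \<or> \<not> special E sp (last p)))"

datatype 'e fvert = Wm nat | Wb nat "'e dedge list"
datatype 'e fedge = Fm nat | Fb nat "'e dedge list"

text \<open>x_i for 1 \<le> i \<le> m, with x_{m+1} = x_1 and w_0 = w_m.\<close>
definition cyc_nth :: "'e list \<Rightarrow> nat \<Rightarrow> 'e" where
  "cyc_nth x i = x ! ((i - 1) mod length x)"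

definition Xset :: "('v,'e) dgraph \<Rightarrow> ('v \<Rightarrow> 'e) \<Rightarrow> 'e list \<Rightarrow> nat \<Rightarrow> 'e dedge list set" where
  "Xset E sp x i = {y. basis_path E sp y \<and> basis_path E sp [Real (cyc_nth x i), hd y]
                      \<and> hd y \<noteq> Real (cyc_nth x (Suc i))}"

definition Fx :: "('v,'e) dgraph \<Rightarrow> ('v \<Rightarrow> 'e) \<Rightarrow> 'e list \<Rightarrow> ('e fvert, 'e fedge) dgraph" where
  "Fx E sp x = \<lparr>
     verts = {Wm i | i. 1 \<le> i \<and> i \<le> length x}
             \<union> {Wb i y | i y. 1 \<le> i \<and> i \<le> length x \<and> y \<in> Xset E sp x i},
     edges = {Fm i | i. 1 \<le> i \<and> i \<le> length x}
             \<union> {Fb i y | i y. 1 \<le> i \<and> i \<le> length x \<and> y \<in> Xset E sp x i},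
     src = (\<lambda>f. case f of
              Fm i \<Rightarrow> Wm (if i = 1 then length x else i - 1)
            | Fb i y \<Rightarrow> (if length y = 1 then Wm i else Wb i (butlast y))),
     rng = (\<lambda>f. case f of Fm i \<Rightarrow> Wm i | Fb i y \<Rightarrow> Wb i y) \<rparr>"

definition phiV_x :: "('v,'e) dgraph \<Rightarrow> 'e list \<Rightarrow> 'e fvert \<Rightarrow> 'v" where
  "phiV_x E x w = (case w of Wm i \<Rightarrow> rng E (cyc_nth x i) | Wb i y \<Rightarrow> d_rng E (last y))"

definition phiE_x :: "'e list \<Rightarrow> 'e fedge \<Rightarrow> 'e dedge" where
  "phiE_x x f = (case f of Fm i \<Rightarrow> Real (cyc_nth x i) | Fb i y \<Rightarrow> last y)"

text \<open>W(F,phi): the K-vector space with basis F^0, realised as finitely supported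
  functions F^0 \<rightarrow> K.\<close>
definition Wsp :: "('w,'f) dgraph \<Rightarrow> ('w \<Rightarrow> 'k::field) set" where
  "Wsp F = {c. {w. c w \<noteq> 0} \<subseteq> verts F \<and> finite {w. c w \<noteq> 0}}"

definition bvec :: "'w \<Rightarrow> 'w \<Rightarrow> 'k::field" where
  "bvec w = (\<lambda>u. if u = w then 1 else 0)"

text \<open>Generators of L(E): vertices v, real edges e, ghost edges e*.\<close>
datatype ('v,'e) gen = Gv 'v | Ge 'e | Gs 'e

definition gens :: "('v,'e) dgraph \<Rightarrow> ('v,'e) gen set" where
  "gens E = Gv ` verts E \<union> Ge ` edges E \<union> Gs ` edges E"

definition Tsum :: "('v,'e) dgraph \<Rightarrow> ('w,'f) dgraph \<Rightarrow> ('f \<Rightarrow> 'e dedge)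
                    \<Rightarrow> 'e \<Rightarrow> 'f \<Rightarrow> 'w \<Rightarrow> 'k::field" where
  "Tsum E F phiE e f = (\<lambda>u. of_nat (card {(g1,g2). g1 \<in> edges F \<and> g2 \<in> edges F
        \<and> src F g1 = src F f \<and> rng F g1 = src F g2 \<and> rng F g2 = u
        \<and> (\<exists>d\<in>edges E. src E d = src E e \<and> d \<noteq> e
             \<and> phiE g1 = Real d \<and> phiE g2 = Ghost d)}))"

definition gen_act :: "('v,'e) dgraph \<Rightarrow> ('v \<Rightarrow> 'e) \<Rightarrow> ('w,'f) dgraph \<Rightarrow> ('w \<Rightarrow> 'v)
     \<Rightarrow> ('f \<Rightarrow> 'e dedge) \<Rightarrow> 'w \<Rightarrow> ('v,'e) gen \<Rightarrow> ('w \<Rightarrow> 'k::field)" where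
  "gen_act E sp F phiV phiE w g = (case g of
     Gv v \<Rightarrow> (if phiV w = v then bvec w else 0)
   | Ge e \<Rightarrow>
       (if \<exists>f\<in>edges F. src F f = w \<and> phiE f = Real e
        then bvec (rng F (SOME f. f \<in> edges F \<and> src F f = w \<and> phiE f = Real e))
        else if \<exists>f\<in>edges F. rng F f = w \<and> phiE f = Ghost e
        then bvec (src F (SOME f. f \<in> edges F \<and> rng F f = w \<and> phiE f = Ghost e))
        else 0)
   | Gs e \<Rightarrow>
       (if \<exists>f\<in>edges F. src F f = w \<and> phiE f = Ghost e
        then bvec (rng F (SOME f. f \<in> edges F \<and> src F f = w \<and> phiE f = Ghost e))
        else if special E sp e \<and> (\<exists>f\<in>edges F. rng F f = w \<and> phiE f = Real e)
        then (let f = (SOME f. f \<in> edges F \<and> rng F f = w \<and> phiE f = Real e)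
              in bvec (src F f) - Tsum E F phiE e f)
        else 0))"

definition lin_act :: "('v,'e) dgraph \<Rightarrow> ('v \<Rightarrow> 'e) \<Rightarrow> ('w,'f) dgraph \<Rightarrow> ('w \<Rightarrow> 'v)
     \<Rightarrow> ('f \<Rightarrow> 'e dedge) \<Rightarrow> ('v,'e) gen \<Rightarrow> ('w \<Rightarrow> 'k::field) \<Rightarrow> ('w \<Rightarrow> 'k)" where
  "lin_act E sp F phiV phiE g c =
     (\<lambda>u. \<Sum>w\<in>{w. c w \<noteq> 0}. c w * gen_act E sp F phiV phiE w g u)"

text \<open>L(E)-submodules of W(F,phi): K-subspaces closed under the action of the
  generators of L(E) (equivalently, of all of L(E), which they generate as an algebra).\<close>
definition submodule :: "('v,'e) dgraph \<Rightarrow> ('v \<Rightarrow> 'e) \<Rightarrow> ('w,'f) dgraph \<Rightarrow> ('w \<Rightarrow> 'v)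
     \<Rightarrow> ('f \<Rightarrow> 'e dedge) \<Rightarrow> ('w \<Rightarrow> 'k::field) set \<Rightarrow> bool" where
  "submodule E sp F phiV phiE U \<longleftrightarrow> U \<subseteq> Wsp F \<and> 0 \<in> U
     \<and> (\<forall>c\<in>U. \<forall>d\<in>U. c + d \<in> U) \<and> (\<forall>a. \<forall>c\<in>U. (\<lambda>u. a * c u) \<in> U)
     \<and> (\<forall>g\<in>gens E. \<forall>c\<in>U. lin_act E sp F phiV phiE g c \<in> U)"

definition simple_module :: "('v,'e) dgraph \<Rightarrow> ('v \<Rightarrow> 'e) \<Rightarrow> ('w,'f) dgraph \<Rightarrow> ('w \<Rightarrow> 'v)
     \<Rightarrow> ('f \<Rightarrow> 'e dedge) \<Rightarrow> 'k::field itself \<Rightarrow> bool" where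
  "simple_module E sp F phiV phiE (_::'k itself) \<longleftrightarrow>
     (Wsp F :: ('w \<Rightarrow> 'k) set) \<noteq> {0} \<and>
     (\<forall>U :: ('w \<Rightarrow> 'k) set. submodule E sp F phiV phiE U \<longrightarrow> U = {0} \<or> U = Wsp F)"

definition End_mod :: "('v,'e) dgraph \<Rightarrow> ('v \<Rightarrow> 'e) \<Rightarrow> ('w,'f) dgraph \<Rightarrow> ('w \<Rightarrow> 'v)
     \<Rightarrow> ('f \<Rightarrow> 'e dedge) \<Rightarrow> (('w \<Rightarrow> 'k::field) \<Rightarrow> ('w \<Rightarrow> 'k)) set" where
  "End_mod E sp F phiV phiE = {h.
      (\<forall>c\<in>Wsp F. h c \<in> Wsp F)
    \<and> (\<forall>c\<in>Wsp F. \<forall>d\<in>Wsp F. h (c + d) = h c + h d)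
    \<and> (\<forall>a. \<forall>c\<in>Wsp F. h (\<lambda>u. a * c u) = (\<lambda>u. a * h c u))
    \<and> (\<forall>g\<in>gens E. \<forall>c\<in>Wsp F. h (lin_act E sp F phiV phiE g c) = lin_act E sp F phiV phiE g (h c))
    \<and> (\<forall>c. c \<notin> Wsp F \<longrightarrow> h c = undefined)}"

text \<open>Ring isomorphism K \<cong> End (ring structure of End: pointwise sum, composition, identity).\<close>
definition ring_iso_to_End :: "('w,'f) dgraph \<Rightarrow> (('w \<Rightarrow> 'k::field) \<Rightarrow> ('w \<Rightarrow> 'k)) set
      \<Rightarrow> ('k \<Rightarrow> (('w \<Rightarrow> 'k) \<Rightarrow> ('w \<Rightarrow> 'k))) \<Rightarrow> bool" where
  "ring_iso_to_End F End \<Phi> \<longleftrightarrow> bij_betw \<Phi> UNIV End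
     \<and> (\<forall>a b. \<forall>c\<in>Wsp F. \<Phi> (a + b) c = \<Phi> a c + \<Phi> b c)
     \<and> (\<forall>a b. \<forall>c\<in>Wsp F. \<Phi> (a * b) c = \<Phi> a (\<Phi> b c))
     \<and> (\<forall>c\<in>Wsp F. \<Phi> 1 c = c)"

end

theory Submission imports Defs begin

lemma sum_fun_apply': "(\<Sum>w\<in>S. f w) u = (\<Sum>w\<in>S. f w u)"
  for f :: "'a \<Rightarrow> 'b \<Rightarrow> 'c::comm_monoid_add"
  by (induction S rule: infinite_finite_induct) auto

lemma bvec_nz: "bvec v u \<noteq> (0::'k::field) \<longleftrightarrow> u = v"
  by (simp add: bvec_def)

lemma supp_diff: "(a - b) u \<noteq> (0::'k::field) \<Longrightarrow> a u \<noteq> 0 \<or> b u \<noteq> 0"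
  by auto

lemma Wsp_iff: "c \<in> Wsp F \<longleftrightarrow> {w. c w \<noteq> 0} \<subseteq> verts F \<and> finite {w. c w \<noteq> 0}"
  by (simp add: Wsp_def)

lemma basis_path_butlast:
  assumes "basis_path E sp ys" "length ys \<ge> 2"
  shows "basis_path E sp (butlast ys)"
proof -
  from assms(1) obtain p q where ys: "ys = map Real p @ map Ghost (rev q)"
    and cond: "p = [] \<or> q = [] \<or> last p \<noteq> last q \<or> \<not> special E sp (last p)"
    and dp: "d_path E ys" unfolding basis_path_def by blast
  have dp': "d_path E (butlast ys)"
  proof -
    have "butlast ys \<noteq> []" using assms(2) by (cases ys rule: rev_cases) auto
    moreover have "\<forall>y\<in>set (butlast ys). d_base y \<in> edges E"
      using dp unfolding d_path_def by (auto dest: in_set_butlastD)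
    moreover have "\<forall>j. Suc j < length (butlast ys) \<longrightarrow> d_rng E (butlast ys!j) = d_src E (butlast ys!Suc j)"
      using dp unfolding d_path_def by (auto simp: nth_butlast)
    ultimately show ?thesis unfolding d_path_def by blast
  qed
  show ?thesis
  proof (cases q)
    case Nil
    then show ?thesis using dp' ys unfolding basis_path_def
      by (intro conjI exI[of _ "butlast p"] exI[of _ "[]::'b list"]) (auto simp: map_butlast)
  next
    case (Cons a q')
    have "butlast ys = map Real p @ map Ghost (rev q')" using ys Cons
      by (simp add: butlast_append)
    moreover have "p = [] \<or> q' = [] \<or> last p \<noteq> last q' \<or> \<not> special E sp (last p)"
      using cond Cons by auto
    ultimately show ?thesis using dp' unfolding basis_path_def by blast
  qed
qed


context
  fixes E :: "('v,'e) dgraph" and sp :: "'v \<Rightarrow> 'e" and x :: "'e list"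
  assumes wf: "wf_graph E" and rf: "row_finite E" and sc: "special_choice E sp"
    and cyc: "is_cycle E x" and spx: "\<forall>e\<in>set x. special E sp e"
begin

abbreviation "FF \<equiv> Fx E sp x"

lemma Wm_in[simp]: "Wm i \<in> verts FF \<longleftrightarrow> 1 \<le> i \<and> i \<le> length x"
  by (simp add: Fx_def)
lemma Wb_in[simp]: "Wb i y \<in> verts FF \<longleftrightarrow> 1 \<le> i \<and> i \<le> length x \<and> y \<in> Xset E sp x i"
  by (simp add: Fx_def)
lemma Fm_in[simp]: "Fm i \<in> edges FF \<longleftrightarrow> 1 \<le> i \<and> i \<le> length x"
  by (simp add: Fx_def)
lemma Fb_in[simp]: "Fb i y \<in> edges FF \<longleftrightarrow> 1 \<le> i \<and> i \<le> length x \<and> y \<in> Xset E sp x i"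
  by (simp add: Fx_def)
lemma src_Fm[simp]: "src FF (Fm i) = Wm (if i = 1 then length x else i - 1)"
  by (simp add: Fx_def)
lemma src_Fb[simp]: "src FF (Fb i y) = (if length y = 1 then Wm i else Wb i (butlast y))"
  by (simp add: Fx_def)
lemma rng_Fm[simp]: "rng FF (Fm i) = Wm i"
  by (simp add: Fx_def)
lemma rng_Fb[simp]: "rng FF (Fb i y) = Wb i y"
  by (simp add: Fx_def)
lemma phiE_Fm[simp]: "phiE_x x (Fm i) = Real (cyc_nth x i)"
  by (simp add: phiE_x_def)
lemma phiE_Fb[simp]: "phiE_x x (Fb i y) = last y"
  by (simp add: phiE_x_def)

lemma m_pos: "length x > 0"
  using cyc unfolding is_cycle_def by simp

lemma special_eq: "special E sp e \<Longrightarrow> special E sp e' \<Longrightarrow> src E e = src E e' \<Longrightarrow> e = e'"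
  unfolding special_def by metis

lemma cyc_nth_in: "cyc_nth x i \<in> set x"
  using m_pos unfolding cyc_nth_def by simp

lemma cyc_adj: "1 \<le> i \<Longrightarrow> rng E (cyc_nth x i) = src E (cyc_nth x (Suc i))"
proof -
  assume "1 \<le> i"
  define k where "k = (i - 1) mod length x"
  have k: "k < length x" using m_pos k_def by simp
  have ik: "i mod length x = (Suc k) mod length x"
    using \<open>1 \<le> i\<close> unfolding k_def by (simp add: mod_Suc_eq)
  have e1: "cyc_nth x i = x ! k" unfolding cyc_nth_def k_def ..
  have e2: "cyc_nth x (Suc i) = x ! ((Suc k) mod length x)" unfolding cyc_nth_def using ik by simp
  show ?thesis
  proof (cases "Suc k < length x")
    case True
    then show ?thesis using cyc e1 e2 unfolding is_cycle_def by simp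
  next
    case False
    then have "Suc k = length x" using k by simp
    then have "k = length x - 1" by simp
    then have "x ! k = last x" using m_pos by (simp add: last_conv_nth)
    moreover have "x ! 0 = hd x" using m_pos by (simp add: hd_conv_nth)
    ultimately show ?thesis using cyc e1 e2 \<open>Suc k = length x\<close> unfolding is_cycle_def by simp
  qed
qed

lemma Xset_ne: "y \<in> Xset E sp x i \<Longrightarrow> y \<noteq> []"
  unfolding Xset_def basis_path_def d_path_def by simp

lemma Xset_butlast: "y \<in> Xset E sp x i \<Longrightarrow> length y \<ge> 2 \<Longrightarrow> butlast y \<in> Xset E sp x i \<and> hd (butlast y) = hd y"
proof -
  assume y: "y \<in> Xset E sp x i" and l: "length y \<ge> 2"
  then have hd: "hd (butlast y) = hd y"
    by (cases y) (auto simp: butlast_def split: list.splits)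
  show ?thesis using y l basis_path_butlast hd unfolding Xset_def by auto
qed

lemma Xset_hd_real: "y \<in> Xset E sp x i \<Longrightarrow> hd y = Real e \<Longrightarrow> rng E (cyc_nth x i) = src E e"
proof -
  assume y: "y \<in> Xset E sp x i" and h: "hd y = Real e"
  then have "d_path E [Real (cyc_nth x i), Real e]" unfolding Xset_def basis_path_def by simp
  then have "d_rng E ([Real (cyc_nth x i), Real e] ! 0) = d_src E ([Real (cyc_nth x i), Real e] ! Suc 0)"
    unfolding d_path_def by (metis One_nat_def length_Cons lessI list.size(3))
  then show ?thesis by simp
qed

lemma Xset_hd_not_x: "y \<in> Xset E sp x i \<Longrightarrow> 1 \<le> i \<Longrightarrow> hd y = Real e \<Longrightarrow> e \<in> set x \<Longrightarrow> False"
proof -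
  assume a: "y \<in> Xset E sp x i" "1 \<le> i" "hd y = Real e" "e \<in> set x"
  have "src E e = src E (cyc_nth x (Suc i))"
    using Xset_hd_real[OF a(1,3)] cyc_adj[OF a(2)] by simp
  then have "e = cyc_nth x (Suc i)"
    using special_eq spx a(4) cyc_nth_in by blast
  then show False using a unfolding Xset_def by simp
qed

lemma cyc_prev: "1 \<le> i \<Longrightarrow> i \<le> length x \<Longrightarrow> cyc_nth x (Suc (if i = 1 then length x else i - 1)) = cyc_nth x i"
  unfolding cyc_nth_def by auto

lemma Xset_butlast': "y \<in> Xset E sp x i \<Longrightarrow> length y \<noteq> 1 \<Longrightarrow> butlast y \<in> Xset E sp x i"
proof -
  assume a: "y \<in> Xset E sp x i" "length y \<noteq> 1"
  then have "length y \<ge> 2" using Xset_ne[OF a(1)] by (cases y) (auto simp: Suc_le_eq)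
  then show ?thesis using Xset_butlast a by blast
qed

lemma edge_src_in: "f \<in> edges FF \<Longrightarrow> src FF f \<in> verts FF"
  by (cases f) (auto simp: Xset_butlast')

lemma edge_rng_in: "f \<in> edges FF \<Longrightarrow> rng FF f \<in> verts FF"
  by (cases f) auto

lemma out_unique:
  assumes "f1 \<in> edges FF" "f2 \<in> edges FF" "src FF f1 = src FF f2" "phiE_x x f1 = phiE_x x f2"
  shows "f1 = f2"
proof (cases f1)
  case (Fm i)
  show ?thesis
  proof (cases f2)
    case (Fm j)
    then show ?thesis using assms \<open>f1 = Fm i\<close> by (auto split: if_splits)
  next
    case (Fb j z)
    then have z: "length z = 1" "z \<in> Xset E sp x j" using assms \<open>f1 = Fm i\<close> by (auto split: if_splits)
    then have "hd z = last z" by (cases z) auto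
    then show ?thesis using assms \<open>f1 = Fm i\<close> Fb z cyc_prev[of i] unfolding Xset_def
      by (auto split: if_splits)
  qed
next
  case (Fb i y)
  show ?thesis
  proof (cases f2)
    case (Fm j)
    then have z: "length y = 1" "y \<in> Xset E sp x i" using assms \<open>f1 = Fb i y\<close> by (auto split: if_splits)
    then have "hd y = last y" by (cases y) auto
    then show ?thesis using assms \<open>f1 = Fb i y\<close> Fm z cyc_prev[of j] unfolding Xset_def
      by (auto split: if_splits)
  next
    case (Fb j z)
    have ne: "y \<noteq> []" "z \<noteq> []" using assms Fb \<open>f1 = Fb i y\<close> Xset_ne by auto
    have "i = j \<and> y = z"
    proof (cases "length y = 1")
      case True
      then have "length z = 1" using assms Fb \<open>f1 = Fb i y\<close> by (auto split: if_splits)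
      then show ?thesis using True assms Fb \<open>f1 = Fb i y\<close>
        by (cases y; cases z) auto
    next
      case False
      then have "length z \<noteq> 1" using assms Fb \<open>f1 = Fb i y\<close> by (auto split: if_splits)
      then have "i = j" "butlast y = butlast z" "last y = last z"
        using False assms Fb \<open>f1 = Fb i y\<close> by auto
      then show ?thesis using ne by (metis append_butlast_last_id)
    qed
    then show ?thesis using Fb \<open>f1 = Fb i y\<close> by simp
  qed
qed

lemma rng_is_Wb: "f \<in> edges FF \<Longrightarrow> rng FF f = Wb i y \<Longrightarrow> f = Fb i y"
  by (cases f) auto
lemma rng_is_Wm: "f \<in> edges FF \<Longrightarrow> rng FF f = Wm i \<Longrightarrow> f = Fm i"
  by (cases f) auto
lemma src_is_Wb: "f \<in> edges FF \<Longrightarrow> src FF f = Wb i y \<Longrightarrow> \<exists>z. f = Fb i z \<and> length z \<noteq> 1 \<and> butlast z = y \<and> z \<in> Xset E sp x i"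
  by (cases f) (auto split: if_splits)


lemma Tsum_nz_ex:
  assumes h: "Tsum E' F phiE e f u \<noteq> (0::'k::field)"
  shows "\<exists>g1 g2. g1 \<in> edges F \<and> g2 \<in> edges F
        \<and> src F g1 = src F f \<and> rng F g1 = src F g2 \<and> rng F g2 = u
        \<and> (\<exists>d\<in>edges E'. src E' d = src E' e \<and> d \<noteq> e
             \<and> phiE g1 = Real d \<and> phiE g2 = Ghost d)"
proof -
  define S where "S = {(g1,g2). g1 \<in> edges F \<and> g2 \<in> edges F
        \<and> src F g1 = src F f \<and> rng F g1 = src F g2 \<and> rng F g2 = u
        \<and> (\<exists>d\<in>edges E'. src E' d = src E' e \<and> d \<noteq> e
             \<and> phiE g1 = Real d \<and> phiE g2 = Ghost d)}"
  have "Tsum E' F phiE e f u = (of_nat (card S) :: 'k)" unfolding Tsum_def S_def by simp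
  then have "card S \<noteq> 0"
  proof -
    assume t: "Tsum E' F phiE e f u = (of_nat (card S) :: 'k)"
    show "card S \<noteq> 0"
    proof
      assume "card S = 0"
      then show False using t h by simp
    qed
  qed
  then have "S \<noteq> {}" by auto
  then obtain p where "p \<in> S" by blast
  then show ?thesis unfolding S_def by (cases p) auto
qed

lemma Tsum_supp_gen: "Tsum E' F phiE e f u \<noteq> (0::'k::field) \<Longrightarrow> \<exists>g1 g2. g1 \<in> edges F \<and> g2 \<in> edges F
   \<and> src F g1 = src F f \<and> rng F g1 = src F g2 \<and> rng F g2 = u"
proof -
  assume h: "Tsum E' F phiE e f u \<noteq> (0::'k::field)"
  from Tsum_nz_ex[OF h] show ?thesis by blast
qed

lemma some_bex: "\<exists>f\<in>A. P f \<Longrightarrow> (SOME f. f \<in> A \<and> P f) \<in> A \<and> P (SOME f. f \<in> A \<and> P f)"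
  by (metis (mono_tags, lifting) someI_ex)

lemma gen_act_Gv_cases:
  "gen_act E sp F phiV phiE w (Gv v) u \<noteq> (0::'k::field) \<Longrightarrow> u = w \<and> phiV w = v"
  unfolding gen_act_def by (auto simp: bvec_def split: if_splits)

lemma gen_act_Ge_cases:
  assumes "gen_act E sp F phiV phiE w (Ge e) u \<noteq> (0::'k::field)"
  shows "(\<exists>f\<in>edges F. src F f = w \<and> phiE f = Real e \<and> u = rng F f)
       \<or> (\<exists>f\<in>edges F. rng F f = w \<and> phiE f = Ghost e \<and> u = src F f)"
proof -
  define P1 where "P1 = (\<lambda>f. src F f = w \<and> phiE f = Real e)"
  define P2 where "P2 = (\<lambda>f. rng F f = w \<and> phiE f = Ghost e)"
  have eq: "gen_act E sp F phiV phiE w (Ge e) =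
     (if \<exists>f\<in>edges F. P1 f then bvec (rng F (SOME f. f \<in> edges F \<and> P1 f))
      else if \<exists>f\<in>edges F. P2 f then bvec (src F (SOME f. f \<in> edges F \<and> P2 f))
      else (0 :: _ \<Rightarrow> 'k))"
    unfolding gen_act_def P1_def P2_def by simp
  show ?thesis
  proof (cases "\<exists>f\<in>edges F. P1 f")
    case True
    then have "u = rng F (SOME f. f \<in> edges F \<and> P1 f)" using assms eq by (simp add: bvec_def split: if_splits)
    then show ?thesis using some_bex[OF True] unfolding P1_def by blast
  next
    case False
    show ?thesis
    proof (cases "\<exists>f\<in>edges F. P2 f")
      case True
      then have "u = src F (SOME f. f \<in> edges F \<and> P2 f)" using assms eq False by (simp add: bvec_def split: if_splits)
      then show ?thesis using some_bex[OF True] unfolding P2_def by blast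
    next
      case False2: False
      then show ?thesis using assms unfolding eq if_not_P[OF False] if_not_P[OF False2] by simp
    qed
  qed
qed

lemma gen_act_Gs_cases:
  assumes "gen_act E sp F phiV phiE w (Gs e) u \<noteq> (0::'k::field)"
  shows "(\<exists>f\<in>edges F. src F f = w \<and> phiE f = Ghost e \<and> u = rng F f)
       \<or> (special E sp e \<and> (\<exists>f\<in>edges F. rng F f = w \<and> phiE f = Real e
             \<and> (u = src F f \<or> (Tsum E F phiE e f u :: 'k) \<noteq> 0)))"
proof -
  define P1 where "P1 = (\<lambda>f. src F f = w \<and> phiE f = Ghost e)"
  define P2 where "P2 = (\<lambda>f. rng F f = w \<and> phiE f = Real e)"
  have eq: "gen_act E sp F phiV phiE w (Gs e) =
     (if \<exists>f\<in>edges F. P1 f then bvec (rng F (SOME f. f \<in> edges F \<and> P1 f))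
      else if special E sp e \<and> (\<exists>f\<in>edges F. P2 f)
      then bvec (src F (SOME f. f \<in> edges F \<and> P2 f)) - Tsum E F phiE e (SOME f. f \<in> edges F \<and> P2 f)
      else (0 :: _ \<Rightarrow> 'k))"
    unfolding gen_act_def P1_def P2_def Let_def by simp
  show ?thesis
  proof (cases "\<exists>f\<in>edges F. P1 f")
    case True
    then have "u = rng F (SOME f. f \<in> edges F \<and> P1 f)" using assms eq by (simp add: bvec_def split: if_splits)
    then show ?thesis using some_bex[OF True] unfolding P1_def by blast
  next
    case False
    show ?thesis
    proof (cases "special E sp e \<and> (\<exists>f\<in>edges F. P2 f)")
      case True
      define f0 where "f0 = (SOME f. f \<in> edges F \<and> P2 f)"
      have "(bvec (src F f0) - Tsum E F phiE e f0) u \<noteq> (0::'k)"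
        using assms unfolding eq if_not_P[OF False] if_P[OF True] f0_def .
      then have "u = src F f0 \<or> (Tsum E F phiE e f0 u :: 'k) \<noteq> 0"
        by (auto simp: bvec_def split: if_splits)
      then show ?thesis using some_bex[of "edges F" P2] True unfolding P2_def f0_def by blast
    next
      case False2: False
      then show ?thesis using assms unfolding eq if_not_P[OF False] if_not_P[OF False2] by simp
    qed
  qed
qed

lemma bvec_Wsp: "v \<in> verts F \<Longrightarrow> (bvec v :: _ \<Rightarrow> 'k::field) \<in> Wsp F"
  unfolding Wsp_def bvec_def by auto

lemma zero_Wsp: "(0 :: _ \<Rightarrow> 'k::field) \<in> Wsp F"
  unfolding Wsp_def by auto

lemma Wsp_minus: "a \<in> Wsp F \<Longrightarrow> b \<in> Wsp F \<Longrightarrow> (a - b :: _ \<Rightarrow> 'k::field) \<in> Wsp F"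
proof -
  assume a: "a \<in> Wsp F" "b \<in> Wsp F"
  have "{w. (a - b) w \<noteq> 0} \<subseteq> {w. a w \<noteq> 0} \<union> {w. b w \<noteq> 0}" by auto
  then show ?thesis using a unfolding Wsp_def by (auto intro: finite_subset)
qed

lemma Wsp_plus: "a \<in> Wsp F \<Longrightarrow> b \<in> Wsp F \<Longrightarrow> (a + b :: _ \<Rightarrow> 'k::field) \<in> Wsp F"
proof -
  assume a: "a \<in> Wsp F" "b \<in> Wsp F"
  have "{w. (a + b) w \<noteq> 0} \<subseteq> {w. a w \<noteq> 0} \<union> {w. b w \<noteq> 0}" by auto
  then show ?thesis using a unfolding Wsp_def by (auto intro: finite_subset)
qed

lemma Wsp_smult: "a \<in> Wsp F \<Longrightarrow> (\<lambda>u. k * a u :: 'k::field) \<in> Wsp F"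
proof -
  assume a: "a \<in> Wsp F"
  have "{w. k * a w \<noteq> 0} \<subseteq> {w. a w \<noteq> 0}" by auto
  then show ?thesis using a unfolding Wsp_def by (auto intro: finite_subset)
qed

lemma Tsum_Wsp:
  assumes e: "e \<in> edges E"
  shows "(Tsum E FF (phiE_x x) e f :: _ \<Rightarrow> 'k::field) \<in> Wsp FF"
proof -
  define P where "P = {(g1,g2). g1 \<in> edges FF \<and> g2 \<in> edges FF
        \<and> src FF g1 = src FF f \<and> rng FF g1 = src FF g2
        \<and> (\<exists>d\<in>edges E. src E d = src E e \<and> d \<noteq> e
             \<and> phiE_x x g1 = Real d \<and> phiE_x x g2 = Ghost d)}"
  have sub: "{u. (Tsum E FF (phiE_x x) e f u :: 'k) \<noteq> 0} \<subseteq> (rng FF \<circ> snd) ` P"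
  proof
    fix u assume "u \<in> {u. (Tsum E FF (phiE_x x) e f u :: 'k) \<noteq> 0}"
    then have "(Tsum E FF (phiE_x x) e f u :: 'k) \<noteq> 0" by simp
    from Tsum_nz_ex[OF this] obtain g1 g2 where "(g1,g2) \<in> P" "rng FF g2 = u"
      unfolding P_def by blast
    then show "u \<in> (rng FF \<circ> snd) ` P" by (metis comp_apply image_eqI snd_conv)
  qed
  have inj: "inj_on (\<lambda>p. d_base (phiE_x x (fst p))) P"
  proof (rule inj_onI)
    fix p p' assume p: "p \<in> P" "p' \<in> P" and eq: "d_base (phiE_x x (fst p)) = d_base (phiE_x x (fst p'))"
    obtain g1 g2 where pp: "p = (g1,g2)" by (cases p)
    obtain g1' g2' where pp': "p' = (g1',g2')" by (cases p')
    obtain d where d: "phiE_x x g1 = Real d" "phiE_x x g2 = Ghost d" using p(1) pp unfolding P_def by auto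
    obtain d' where d': "phiE_x x g1' = Real d'" "phiE_x x g2' = Ghost d'" using p(2) pp' unfolding P_def by auto
    have "d = d'" using eq d d' pp pp' by simp
    then have "g1 = g1'" using out_unique p pp pp' d d' unfolding P_def by auto
    then have "g2 = g2'" using out_unique p pp pp' d d' \<open>d = d'\<close> unfolding P_def by auto
    then show "p = p'" using \<open>g1 = g1'\<close> pp pp' by simp
  qed
  have "(\<lambda>p. d_base (phiE_x x (fst p))) ` P \<subseteq> {d\<in>edges E. src E d = src E e}"
    unfolding P_def by auto
  moreover have "finite {d\<in>edges E. src E d = src E e}"
    using rf wf e unfolding row_finite_def wf_graph_def by auto
  ultimately have "finite P" using inj finite_imageD finite_subset by blast
  then have "finite {u. (Tsum E FF (phiE_x x) e f u :: 'k) \<noteq> 0}" using sub finite_subset by blast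
  moreover have "(rng FF \<circ> snd) ` P \<subseteq> verts FF" unfolding P_def using edge_rng_in by auto
  ultimately show ?thesis using sub unfolding Wsp_def by auto
qed


lemma some_edge_props:
  assumes "\<exists>f\<in>edges FF. P f"
  shows "(SOME f. f \<in> edges FF \<and> P f) \<in> edges FF" "P (SOME f. f \<in> edges FF \<and> P f)"
  using some_bex[OF assms] by auto

lemma gen_act_Wsp:
  assumes w: "w \<in> verts FF"
  shows "(gen_act E sp FF (phiV_x E x) (phiE_x x) w g :: _ \<Rightarrow> 'k::field) \<in> Wsp FF"
proof (cases g)
  case (Gv v)
  then show ?thesis using w by (simp add: gen_act_def bvec_Wsp zero_Wsp)
next
  case (Ge e)
  define P1 where "P1 = (\<lambda>f. src FF f = w \<and> phiE_x x f = Real e)"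
  define P2 where "P2 = (\<lambda>f. rng FF f = w \<and> phiE_x x f = Ghost e)"
  have eq: "gen_act E sp FF (phiV_x E x) (phiE_x x) w g =
     (if \<exists>f\<in>edges FF. P1 f then bvec (rng FF (SOME f. f \<in> edges FF \<and> P1 f))
      else if \<exists>f\<in>edges FF. P2 f then bvec (src FF (SOME f. f \<in> edges FF \<and> P2 f))
      else (0 :: _ \<Rightarrow> 'k))"
    unfolding gen_act_def Ge P1_def P2_def by simp
  show ?thesis
  proof (cases "\<exists>f\<in>edges FF. P1 f")
    case True
    then show ?thesis unfolding eq using some_edge_props[OF True] by (simp add: bvec_Wsp edge_rng_in)
  next
    case False
    show ?thesis
    proof (cases "\<exists>f\<in>edges FF. P2 f")
      case True
      then show ?thesis unfolding eq if_not_P[OF False] if_P[OF True] using some_edge_props[OF True]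
        by (simp add: bvec_Wsp edge_src_in)
    next
      case False2: False
      show ?thesis unfolding eq if_not_P[OF False] if_not_P[OF False2] by (rule zero_Wsp)
    qed
  qed
next
  case (Gs e)
  have T: "special E sp e \<Longrightarrow> (Tsum E FF (phiE_x x) e f :: _ \<Rightarrow> 'k) \<in> Wsp FF" for f
    using Tsum_Wsp[of e] unfolding special_def by blast
  define P1 where "P1 = (\<lambda>f. src FF f = w \<and> phiE_x x f = Ghost e)"
  define P2 where "P2 = (\<lambda>f. rng FF f = w \<and> phiE_x x f = Real e)"
  have eq: "gen_act E sp FF (phiV_x E x) (phiE_x x) w g =
     (if \<exists>f\<in>edges FF. P1 f then bvec (rng FF (SOME f. f \<in> edges FF \<and> P1 f))
      else if special E sp e \<and> (\<exists>f\<in>edges FF. P2 f)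
      then bvec (src FF (SOME f. f \<in> edges FF \<and> P2 f)) - Tsum E FF (phiE_x x) e (SOME f. f \<in> edges FF \<and> P2 f)
      else (0 :: _ \<Rightarrow> 'k))"
    unfolding gen_act_def Gs Let_def P1_def P2_def by simp
  show ?thesis
  proof (cases "\<exists>f\<in>edges FF. P1 f")
    case True
    then show ?thesis unfolding eq using some_edge_props[OF True] by (simp add: bvec_Wsp edge_rng_in)
  next
    case False
    show ?thesis
    proof (cases "special E sp e \<and> (\<exists>f\<in>edges FF. P2 f)")
      case True
      then have "\<exists>f\<in>edges FF. P2 f" by blast
      then show ?thesis unfolding eq if_not_P[OF False] if_P[OF True] using some_edge_props[of P2] T True
        by (simp add: bvec_Wsp edge_src_in Wsp_minus)
    next
      case False2: False
      show ?thesis unfolding eq if_not_P[OF False] if_not_P[OF False2] by (rule zero_Wsp)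
    qed
  qed
qed

lemma lin_act_nz:
  "lin_act E' sp' F phiV phiE g c u \<noteq> (0::'k::field) \<Longrightarrow> \<exists>w. c w \<noteq> 0 \<and> (gen_act E' sp' F phiV phiE w g u :: 'k) \<noteq> 0"
proof (rule ccontr)
  assume nz: "lin_act E' sp' F phiV phiE g c u \<noteq> (0::'k::field)"
    and no: "\<not> (\<exists>w. c w \<noteq> 0 \<and> (gen_act E' sp' F phiV phiE w g u :: 'k) \<noteq> 0)"
  have "\<forall>w\<in>{w. c w \<noteq> 0}. c w * (gen_act E' sp' F phiV phiE w g u :: 'k) = 0" using no by auto
  then have "lin_act E' sp' F phiV phiE g c u = 0" unfolding lin_act_def by (rule sum.neutral)
  then show False using nz by simp
qed

lemma lin_act_Wsp:
  assumes c: "c \<in> Wsp FF"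
  shows "(lin_act E sp FF (phiV_x E x) (phiE_x x) g c :: _ \<Rightarrow> 'k::field) \<in> Wsp FF"
proof -
  let ?S = "{w. c w \<noteq> 0}"
  have fin: "finite ?S" and sub: "?S \<subseteq> verts FF" using c unfolding Wsp_def by auto
  have "{u. (lin_act E sp FF (phiV_x E x) (phiE_x x) g c u :: 'k) \<noteq> 0}
     \<subseteq> (\<Union>w\<in>?S. {u. (gen_act E sp FF (phiV_x E x) (phiE_x x) w g u :: 'k) \<noteq> 0})"
    using lin_act_nz by fastforce
  moreover have "\<forall>w\<in>?S. (gen_act E sp FF (phiV_x E x) (phiE_x x) w g :: _ \<Rightarrow> 'k) \<in> Wsp FF"
    using gen_act_Wsp sub by blast
  ultimately show ?thesis using fin unfolding Wsp_def by (auto intro: finite_subset)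
qed

lemma lin_act_smult:
  "lin_act E' sp' F phiV phiE g (\<lambda>u. a * c u) = (\<lambda>u. (a::'k::field) * lin_act E' sp' F phiV phiE g c u)"
proof (cases "a = 0")
  case True
  then show ?thesis unfolding lin_act_def by simp
next
  case False
  then show ?thesis unfolding lin_act_def by (simp add: sum_distrib_left mult.assoc)
qed

lemma lin_act_bvec:
  "lin_act E' sp' F phiV phiE g (bvec w) = (gen_act E' sp' F phiV phiE w g :: _ \<Rightarrow> 'k::field)"
proof -
  have "{u. (bvec w u :: 'k) \<noteq> 0} = {w}" by (auto simp: bvec_def)
  then show ?thesis unfolding lin_act_def by (simp add: bvec_def)
qed


lemma x_edges: "set x \<subseteq> edges E"
  using cyc unfolding is_cycle_def by simp

definition DD :: "nat \<Rightarrow> 'e \<Rightarrow> 'e fvert set" where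
  "DD i0 e0 = {w. \<exists>y. w = Wb i0 y \<and> y \<noteq> [] \<and> hd y = Real e0}"

lemma DD_out: "f \<in> edges FF \<Longrightarrow> src FF f \<in> DD i0 e0 \<Longrightarrow> rng FF f \<in> DD i0 e0"
proof -
  assume f: "f \<in> edges FF" "src FF f \<in> DD i0 e0"
  then obtain y where y: "src FF f = Wb i0 y" "y \<noteq> []" "hd y = Real e0" unfolding DD_def by auto
  then obtain z where z: "f = Fb i0 z" "length z \<noteq> 1" "butlast z = y" using src_is_Wb f by blast
  then have "length z \<ge> 2" using y(2) by (cases z) (auto simp: Suc_le_eq)
  then have "hd z = hd y" using z(3) by (cases z) (auto simp: butlast_def split: list.splits)
  then show ?thesis using z y unfolding DD_def by auto
qed

lemma DD_in:
  assumes f: "f \<in> edges FF" "rng FF f \<in> DD i0 e0" and ns: "\<not> special E sp e0"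
    and lab: "(\<exists>e. phiE_x x f = Ghost e) \<or> (\<exists>e. phiE_x x f = Real e \<and> special E sp e)"
  shows "src FF f \<in> DD i0 e0"
proof -
  obtain y where y: "rng FF f = Wb i0 y" "y \<noteq> []" "hd y = Real e0" using f unfolding DD_def by auto
  then have fy: "f = Fb i0 y" using rng_is_Wb f by blast
  show ?thesis
  proof (cases "length y = 1")
    case True
    then have "last y = hd y" by (cases y) auto
    then show ?thesis using lab fy y ns by auto
  next
    case False
    then have "length y \<ge> 2" using y(2) by (cases y) (auto simp: Suc_le_eq)
    then have "hd (butlast y) = hd y" by (cases y) (auto simp: butlast_def split: list.splits)
    moreover have "butlast y \<noteq> []" using \<open>length y \<ge> 2\<close> by (cases y rule: rev_cases) auto
    ultimately show ?thesis using fy y False unfolding DD_def by auto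
  qed
qed

lemma gen_act_DD:
  assumes w: "w \<in> DD i0 e0" and ns: "\<not> special E sp e0"
    and nz: "(gen_act E sp FF (phiV_x E x) (phiE_x x) w g u :: 'k::field) \<noteq> 0"
  shows "u \<in> DD i0 e0"
proof (cases g)
  case (Gv v)
  then show ?thesis using nz w gen_act_Gv_cases by metis
next
  case (Ge e)
  from gen_act_Ge_cases[OF nz[unfolded Ge]] show ?thesis
  proof
    assume "\<exists>f\<in>edges FF. src FF f = w \<and> phiE_x x f = Real e \<and> u = rng FF f"
    then show ?thesis using DD_out w by blast
  next
    assume "\<exists>f\<in>edges FF. rng FF f = w \<and> phiE_x x f = Ghost e \<and> u = src FF f"
    then show ?thesis using DD_in w ns by blast
  qed
next
  case (Gs e)
  from gen_act_Gs_cases[OF nz[unfolded Gs]] show ?thesis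
  proof
    assume "\<exists>f\<in>edges FF. src FF f = w \<and> phiE_x x f = Ghost e \<and> u = rng FF f"
    then show ?thesis using DD_out w by blast
  next
    assume a: "special E sp e \<and> (\<exists>f\<in>edges FF. rng FF f = w \<and> phiE_x x f = Real e
             \<and> (u = src FF f \<or> (Tsum E FF (phiE_x x) e f u :: 'k) \<noteq> 0))"
    then obtain f where f: "f \<in> edges FF" "rng FF f = w" "phiE_x x f = Real e"
      "u = src FF f \<or> (Tsum E FF (phiE_x x) e f u :: 'k) \<noteq> 0" by blast
    have sf: "src FF f \<in> DD i0 e0" using DD_in[OF f(1) _ ns] f a w by blast
    show ?thesis
    proof (cases "u = src FF f")
      case True then show ?thesis using sf by simp
    next
      case False
      then have "(Tsum E FF (phiE_x x) e f u :: 'k) \<noteq> 0" using f by blast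
      from Tsum_supp_gen[OF this] obtain g1 g2 where "g1 \<in> edges FF" "g2 \<in> edges FF" "src FF g1 = src FF f" "rng FF g1 = src FF g2" "rng FF g2 = u"
        by blast
      then show ?thesis using DD_out sf by metis
    qed
  qed
qed

lemma not_simple:
  assumes ex: "has_exit E x"
  shows "\<not> simple_module E sp FF (phiV_x E x) (phiE_x x) TYPE('k::field)"
proof -
  obtain e0 l where e0: "e0 \<in> edges E" "l < length x" "src E e0 = src E (x!l)" "e0 \<noteq> x!l"
    using ex unfolding has_exit_def by blast
  have ns: "\<not> special E sp e0"
    using special_eq spx e0 nth_mem by metis
  define i0 where "i0 = (if l = 0 then length x else l)"
  have i0: "1 \<le> i0" "i0 \<le> length x" using e0(2) m_pos unfolding i0_def by auto
  have c1: "cyc_nth x (Suc i0) = x ! l" unfolding cyc_nth_def i0_def using e0(2) by auto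
  have c2: "rng E (cyc_nth x i0) = src E e0" using cyc_adj[OF i0(1)] c1 e0(3) by simp
  have ce: "cyc_nth x i0 \<in> edges E" using cyc_nth_in x_edges by blast
  have bp1: "basis_path E sp [Real e0]"
  proof -
    have "d_path E [Real e0]" unfolding d_path_def using e0(1) by simp
    moreover have "[Real e0] = map Real [e0] @ map Ghost (rev ([]::'e list))" by simp
    ultimately show ?thesis unfolding basis_path_def by blast
  qed
  have bp2: "basis_path E sp [Real (cyc_nth x i0), Real e0]"
  proof -
    have "d_path E [Real (cyc_nth x i0), Real e0]" unfolding d_path_def using e0(1) ce c2
      by (auto simp: less_Suc_eq)
    moreover have "[Real (cyc_nth x i0), Real e0] = map Real [cyc_nth x i0, e0] @ map Ghost (rev ([]::'e list))" by simp
    ultimately show ?thesis unfolding basis_path_def by blast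
  qed
  have X: "[Real e0] \<in> Xset E sp x i0"
    unfolding Xset_def using bp1 bp2 c1 e0(4) by auto
  define U where "U = {c :: 'e fvert \<Rightarrow> 'k. c \<in> Wsp FF \<and> (\<forall>u. c u \<noteq> 0 \<longrightarrow> u \<in> DD i0 e0)}"
  have sm: "submodule E sp FF (phiV_x E x) (phiE_x x) U"
    unfolding submodule_def
  proof (intro conjI ballI allI)
    show "U \<subseteq> Wsp FF" unfolding U_def by auto
    show "0 \<in> U" unfolding U_def using zero_Wsp by auto
    show "c + d \<in> U" if "c \<in> U" "d \<in> U" for c d
    proof -
      have c: "c \<in> Wsp FF" "\<forall>u. c u \<noteq> 0 \<longrightarrow> u \<in> DD i0 e0" using that(1) unfolding U_def by auto
      have d: "d \<in> Wsp FF" "\<forall>u. d u \<noteq> 0 \<longrightarrow> u \<in> DD i0 e0" using that(2) unfolding U_def by auto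
      have "\<forall>u. (c + d) u \<noteq> 0 \<longrightarrow> u \<in> DD i0 e0"
      proof (intro allI impI)
        fix u assume "(c + d) u \<noteq> 0"
        then have "c u \<noteq> 0 \<or> d u \<noteq> 0" by auto
        then show "u \<in> DD i0 e0" using c(2) d(2) by blast
      qed
      then show ?thesis using Wsp_plus[OF c(1) d(1)] unfolding U_def by blast
    qed
    show "(\<lambda>u. a * c u) \<in> U" if "c \<in> U" for a c
    proof -
      have c: "c \<in> Wsp FF" "\<forall>u. c u \<noteq> 0 \<longrightarrow> u \<in> DD i0 e0" using that(1) unfolding U_def by auto
      have "\<forall>u. a * c u \<noteq> 0 \<longrightarrow> u \<in> DD i0 e0" using c(2) by simp
      then show ?thesis using Wsp_smult[OF c(1)] unfolding U_def by blast
    qed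
    show "lin_act E sp FF (phiV_x E x) (phiE_x x) g c \<in> U" if "g \<in> gens E" "c \<in> U" for g c
    proof -
      have c: "c \<in> Wsp FF" "\<forall>u. c u \<noteq> 0 \<longrightarrow> u \<in> DD i0 e0" using that(2) unfolding U_def by auto
      have "\<forall>u. lin_act E sp FF (phiV_x E x) (phiE_x x) g c u \<noteq> 0 \<longrightarrow> u \<in> DD i0 e0"
      proof (intro allI impI)
        fix u assume "lin_act E sp FF (phiV_x E x) (phiE_x x) g c u \<noteq> 0"
        from lin_act_nz[OF this] obtain w where w: "c w \<noteq> 0"
          "(gen_act E sp FF (phiV_x E x) (phiE_x x) w g u :: 'k) \<noteq> 0" by blast
        show "u \<in> DD i0 e0" using gen_act_DD[OF _ ns w(2)] c(2) w(1) by blast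
      qed
      then show ?thesis using lin_act_Wsp[OF c(1)] unfolding U_def by blast
    qed
  qed
  have "bvec (Wb i0 [Real e0]) \<in> U"
    unfolding U_def DD_def using bvec_Wsp[of "Wb i0 [Real e0]" FF] X i0 by (auto simp: bvec_def)
  moreover have "bvec (Wb i0 [Real e0]) \<noteq> (0 :: _ \<Rightarrow> 'k)"
    by (metis bvec_nz zero_fun_apply)
  ultimately have "U \<noteq> {0}" by auto
  moreover have "bvec (Wm 1) \<in> Wsp FF" "bvec (Wm 1) \<notin> U"
    using bvec_Wsp[of "Wm 1" FF] m_pos unfolding U_def DD_def by (auto simp: bvec_def)
  then have "U \<noteq> Wsp FF" by blast
  ultimately show ?thesis using sm unfolding simple_module_def by blast
qed


lemma gen_act_out_Ge:
  assumes f: "f \<in> edges FF" "src FF f = w" "phiE_x x f = Real e"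
  shows "gen_act E sp FF phiV (phiE_x x) w (Ge e) = (bvec (rng FF f) :: _ \<Rightarrow> 'k::field)"
proof -
  have ex: "\<exists>f\<in>edges FF. src FF f = w \<and> phiE_x x f = Real e" using f by blast
  define f0 where "f0 = (SOME f. f \<in> edges FF \<and> src FF f = w \<and> phiE_x x f = Real e)"
  have "f0 \<in> edges FF" "src FF f0 = w" "phiE_x x f0 = Real e"
    using some_bex[OF ex] unfolding f0_def by auto
  then have "f0 = f" using out_unique f by metis
  then show ?thesis unfolding gen_act_def using ex f0_def by simp
qed

lemma gen_act_out_Gs:
  assumes f: "f \<in> edges FF" "src FF f = w" "phiE_x x f = Ghost e"
  shows "gen_act E sp FF phiV (phiE_x x) w (Gs e) = (bvec (rng FF f) :: _ \<Rightarrow> 'k::field)"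
proof -
  have ex: "\<exists>f\<in>edges FF. src FF f = w \<and> phiE_x x f = Ghost e" using f by blast
  define f0 where "f0 = (SOME f. f \<in> edges FF \<and> src FF f = w \<and> phiE_x x f = Ghost e)"
  have "f0 \<in> edges FF" "src FF f0 = w" "phiE_x x f0 = Ghost e"
    using some_bex[OF ex] unfolding f0_def by auto
  then have "f0 = f" using out_unique f by metis
  then show ?thesis unfolding gen_act_def using ex f0_def by simp
qed

lemma step_Wm:
  "gen_act E sp FF phiV (phiE_x x) (Wm (t mod length x + 1)) (Ge (x ! (Suc t mod length x)))
     = (bvec (Wm (Suc t mod length x + 1)) :: _ \<Rightarrow> 'k::field)"
proof -
  let ?m = "length x"
  define j where "j = Suc t mod ?m + 1"
  have j: "1 \<le> j" "j \<le> ?m" using m_pos unfolding j_def by (auto simp: Suc_le_eq)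
  have s: "(if j = 1 then ?m else j - 1) = t mod ?m + 1"
    unfolding j_def using m_pos by (auto simp: mod_Suc)
  have l: "cyc_nth x j = x ! (Suc t mod ?m)"
    unfolding cyc_nth_def j_def using m_pos by simp
  have "gen_act E sp FF phiV (phiE_x x) (Wm (t mod length x + 1)) (Ge (x ! (Suc t mod length x)))
      = (bvec (rng FF (Fm j)) :: _ \<Rightarrow> 'k)"
    by (rule gen_act_out_Ge) (use j s l in auto)
  then show ?thesis unfolding j_def by simp
qed

definition mu :: "'e dedge list \<Rightarrow> int" where
  "mu y = sum_list (map (\<lambda>d. case d of Real _ \<Rightarrow> 1 | Ghost _ \<Rightarrow> -1) y)"

lemma mu_snoc: "mu (y @ [d]) = mu y + (case d of Real _ \<Rightarrow> 1 | Ghost _ \<Rightarrow> -1)"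
  unfolding mu_def by simp

lemma mu_butlast: "z \<noteq> [] \<Longrightarrow> mu z = mu (butlast z) + (case last z of Real _ \<Rightarrow> 1 | Ghost _ \<Rightarrow> -1)"
  by (metis append_butlast_last_id mu_snoc)

lemma mu_bound: "\<bar>mu y\<bar> \<le> int (length y)"
proof (induction y)
  case Nil then show ?case by (simp add: mu_def)
next
  case (Cons d y)
  have "mu (d # y) = (case d of Real _ \<Rightarrow> 1 | Ghost _ \<Rightarrow> -1) + mu y" unfolding mu_def by simp
  then show ?case using Cons by (cases d) auto
qed

definition GG :: "int \<Rightarrow> 'e fvert set" where
  "GG a = {w. (\<exists>i. w = Wm i) \<or> (\<exists>i y. w = Wb i y \<and> a \<le> mu y)}"

lemma step_mu:
  assumes e: "e \<in> set x" and w: "w \<in> verts FF" "w \<in> GG a"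
    and nz: "(gen_act E sp FF phiV (phiE_x x) w (Ge e) u :: 'k::field) \<noteq> 0"
  shows "u \<in> GG (a + 1)"
  using gen_act_Ge_cases[OF nz]
proof
  assume "\<exists>f\<in>edges FF. src FF f = w \<and> phiE_x x f = Real e \<and> u = rng FF f"
  then obtain f where f: "f \<in> edges FF" "src FF f = w" "phiE_x x f = Real e" "u = rng FF f" by blast
  show ?thesis
  proof (cases f)
    case (Fm j) then show ?thesis using f unfolding GG_def by auto
  next
    case (Fb j z)
    have z: "z \<in> Xset E sp x j" "1 \<le> j" using f Fb by auto
    have zne: "z \<noteq> []" using Xset_ne z by blast
    show ?thesis
    proof (cases "length z = 1")
      case True
      then have "hd z = last z" by (cases z) auto
      then have "hd z = Real e" using f Fb by simp
      then show ?thesis using Xset_hd_not_x[OF z(1,2) _ e] by blast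
    next
      case False
      then have "w = Wb j (butlast z)" using f Fb by simp
      then have "a \<le> mu (butlast z)" using w(2) unfolding GG_def by auto
      moreover have "mu z = mu (butlast z) + 1" using mu_butlast[OF zne] f Fb by simp
      ultimately show ?thesis using f Fb unfolding GG_def by auto
    qed
  qed
next
  assume "\<exists>f\<in>edges FF. rng FF f = w \<and> phiE_x x f = Ghost e \<and> u = src FF f"
  then obtain f where f: "f \<in> edges FF" "rng FF f = w" "phiE_x x f = Ghost e" "u = src FF f" by blast
  show ?thesis
  proof (cases f)
    case (Fm j) then show ?thesis using f by simp
  next
    case (Fb j z)
    have z: "z \<in> Xset E sp x j" using f Fb by auto
    have zne: "z \<noteq> []" using Xset_ne z by blast
    have "a \<le> mu z" using f Fb w(2) unfolding GG_def by auto
    moreover have "mu z = mu (butlast z) - 1" using mu_butlast[OF zne] f Fb by simp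
    ultimately show ?thesis using f Fb unfolding GG_def by auto
  qed
qed

lemma phiV_Wm_inj:
  assumes "1 \<le> i" "i \<le> length x" "1 \<le> j" "j \<le> length x" "phiV_x E x (Wm i) = phiV_x E x (Wm j)"
  shows "i = j"
proof -
  have "rng E (cyc_nth x i) = rng E (cyc_nth x j)" using assms(5) unfolding phiV_x_def by simp
  then have "src E (cyc_nth x (Suc i)) = src E (cyc_nth x (Suc j))" using cyc_adj assms by simp
  then have "src E (x ! (i mod length x)) = src E (x ! (j mod length x))" unfolding cyc_nth_def by simp
  moreover have "i mod length x < length x" "j mod length x < length x" using m_pos by auto
  ultimately have "i mod length x = j mod length x"
    using cyc unfolding is_cycle_def inj_on_def by blast
  then show ?thesis using assms(1-4)
    by (metis le_antisym le_neq_implies_less mod_less mod_self not_one_le_zero)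
qed

lemma parent_step:
  assumes y: "y \<in> Xset E sp x i" and i: "1 \<le> i" "i \<le> length x"
  shows "\<exists>g\<in>gens E. gen_act E sp FF phiV (phiE_x x) (if length y = 1 then Wm i else Wb i (butlast y)) g
            = (bvec (Wb i y) :: _ \<Rightarrow> 'k::field)"
proof -
  have f: "Fb i y \<in> edges FF" using y i by simp
  have yne: "y \<noteq> []" using Xset_ne y by blast
  have "\<forall>z\<in>set y. d_base z \<in> edges E" using y unfolding Xset_def basis_path_def d_path_def by blast
  then have le: "d_base (last y) \<in> edges E" using yne by simp
  show ?thesis
  proof (cases "last y")
    case (Real e)
    have "gen_act E sp FF phiV (phiE_x x) (if length y = 1 then Wm i else Wb i (butlast y)) (Ge e)
            = (bvec (rng FF (Fb i y)) :: _ \<Rightarrow> 'k)"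
      by (rule gen_act_out_Ge[OF f]) (simp_all add: Real)
    then have "gen_act E sp FF phiV (phiE_x x) (if length y = 1 then Wm i else Wb i (butlast y)) (Ge e)
            = (bvec (Wb i y) :: _ \<Rightarrow> 'k)" by simp
    moreover have "Ge e \<in> gens E" using le Real unfolding gens_def by simp
    ultimately show ?thesis by blast
  next
    case (Ghost e)
    have "gen_act E sp FF phiV (phiE_x x) (if length y = 1 then Wm i else Wb i (butlast y)) (Gs e)
            = (bvec (rng FF (Fb i y)) :: _ \<Rightarrow> 'k)"
      by (rule gen_act_out_Gs[OF f]) (simp_all add: Ghost)
    then have "gen_act E sp FF phiV (phiE_x x) (if length y = 1 then Wm i else Wb i (butlast y)) (Gs e)
            = (bvec (Wb i y) :: _ \<Rightarrow> 'k)" by simp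
    moreover have "Gs e \<in> gens E" using le Ghost unfolding gens_def by simp
    ultimately show ?thesis by blast
  qed
qed


lemma End_scalar:
  fixes h :: "('e fvert \<Rightarrow> 'k::field) \<Rightarrow> ('e fvert \<Rightarrow> 'k)"
  assumes hE: "h \<in> End_mod E sp FF (phiV_x E x) (phiE_x x)"
  shows "\<exists>a. \<forall>c\<in>Wsp FF. h c = (\<lambda>u. a * c u)"
proof -
  let ?m = "length x"
  let ?LA = "lin_act E sp FF (phiV_x E x) (phiE_x x)"
  let ?GA = "gen_act E sp FF (phiV_x E x) (phiE_x x)"
  have hW: "\<And>c. c \<in> Wsp FF \<Longrightarrow> h c \<in> Wsp FF" using hE unfolding End_mod_def by blast
  have hadd: "\<And>c d. c \<in> Wsp FF \<Longrightarrow> d \<in> Wsp FF \<Longrightarrow> h (c + d) = h c + h d"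
    using hE unfolding End_mod_def by blast
  have hsm: "\<And>a c. c \<in> Wsp FF \<Longrightarrow> h (\<lambda>u. a * c u) = (\<lambda>u. a * h c u)"
    using hE unfolding End_mod_def by blast
  have hcomm: "\<And>g c. g \<in> gens E \<Longrightarrow> c \<in> Wsp FF \<Longrightarrow> h (?LA g c) = ?LA g (h c)"
    using hE unfolding End_mod_def by blast
  define b :: "nat \<Rightarrow> 'e fvert \<Rightarrow> 'k" where "b t = bvec (Wm (t mod ?m + 1))" for t
  define L :: "nat \<Rightarrow> ('v,'e) gen" where "L t = Ge (x ! (Suc t mod ?m))" for t
  have bW: "b t \<in> Wsp FF" for t
    unfolding b_def using m_pos by (intro bvec_Wsp) (simp add: Suc_le_eq)
  have Lx: "x ! (Suc t mod ?m) \<in> set x" for t using m_pos by simp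
  have Lg: "L t \<in> gens E" for t unfolding L_def gens_def using Lx x_edges by blast
  have bstep: "?LA (L t) (b t) = b (Suc t)" for t
    unfolding b_def L_def lin_act_bvec by (rule step_Wm)
  define cs where "cs t = h (b t)" for t
  have cs_step: "cs (Suc t) = ?LA (L t) (cs t)" for t
    unfolding cs_def using hcomm[OF Lg bW] bstep by metis
  have csW: "cs t \<in> Wsp FF" for t unfolding cs_def using hW bW by blast
  have bper: "b (n * ?m) = b 0" for n unfolding b_def by simp
  define c0 where "c0 = cs 0"
  have c0per: "cs (n * ?m) = c0" for n unfolding cs_def c0_def using bper by simp
  define wl :: "'e fvert \<Rightarrow> nat" where "wl w = (case w of Wm _ \<Rightarrow> 0 | Wb _ y \<Rightarrow> length y)" for w
  define B where "B = (\<Sum>w\<in>{w. c0 w \<noteq> 0}. wl w)"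
  have finc0: "finite {w. c0 w \<noteq> 0}" using csW[of 0] unfolding c0_def Wsp_def by blast
  have Bb: "c0 w \<noteq> 0 \<Longrightarrow> wl w \<le> B" for w
    unfolding B_def using finc0 by (intro member_le_sum) auto
  have init: "c0 u \<noteq> 0 \<Longrightarrow> u \<in> GG (- int B)" for u
  proof (cases u)
    case (Wm i) then show ?thesis unfolding GG_def by auto
  next
    case (Wb i y)
    assume "c0 u \<noteq> 0"
    then have "length y \<le> B" using Bb Wb unfolding wl_def by fastforce
    moreover have "- int (length y) \<le> mu y" using mu_bound[of y] by simp
    ultimately show ?thesis using Wb unfolding GG_def by auto
  qed
  have ind: "cs t u \<noteq> 0 \<Longrightarrow> u \<in> GG (- int B + int t)" for t u
  proof (induction t arbitrary: u)
    case 0 then show ?case using init unfolding c0_def by simp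
  next
    case (Suc t)
    then have "?LA (L t) (cs t) u \<noteq> 0" using cs_step by simp
    from lin_act_nz[OF this] obtain w where w: "cs t w \<noteq> 0" "(?GA w (L t) u :: 'k) \<noteq> 0" by blast
    have wv: "w \<in> verts FF" using csW[of t] w(1) unfolding Wsp_def by blast
    have "u \<in> GG (- int B + int t + 1)"
      using step_mu[OF Lx wv Suc.IH[OF w(1)]] w(2) unfolding L_def by blast
    moreover have "- int B + int t + 1 = - int B + int (Suc t)" by simp
    ultimately show ?case by metis
  qed
  have onlyWm: "c0 u \<noteq> 0 \<Longrightarrow> \<exists>i. u = Wm i" for u
  proof (cases u)
    case (Wb i y)
    assume nz: "c0 u \<noteq> 0"
    have "cs ((2 * B + 1) * ?m) u \<noteq> 0" using nz c0per[of "2 * B + 1"] by simp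
    then have "u \<in> GG (- int B + int ((2 * B + 1) * ?m))" by (rule ind)
    then have "- int B + int ((2 * B + 1) * ?m) \<le> mu y" using Wb unfolding GG_def by auto
    moreover have "(2 * B + 1) * 1 \<le> (2 * B + 1) * ?m" using m_pos by (intro mult_le_mono2) (simp add: Suc_le_eq)
    then have "int (2 * B + 1) \<le> int ((2 * B + 1) * ?m)" by (simp only: mult_1_right of_nat_le_iff)
    moreover have "mu y \<le> int B"
      using mu_bound[of y] Bb[OF nz] Wb unfolding wl_def by simp
    ultimately have False by linarith
    then show ?thesis ..
  qed simp
  define v1 where "v1 = phiV_x E x (Wm 1)"
  have v1: "v1 \<in> verts E"
  proof -
    have "cyc_nth x 1 \<in> edges E" using cyc_nth_in x_edges by blast
    then show ?thesis unfolding v1_def phiV_x_def using wf unfolding wf_graph_def by simp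
  qed
  have gv: "Gv v1 \<in> gens E" unfolding gens_def using v1 by simp
  have b0: "b 0 = bvec (Wm 1)" unfolding b_def by simp
  have "?LA (Gv v1) (b 0) = b 0"
    unfolding b0 lin_act_bvec unfolding gen_act_def v1_def by simp
  then have c0fix: "?LA (Gv v1) c0 = c0" unfolding c0_def cs_def using hcomm[OF gv bW[of 0]] by simp
  have only1: "c0 u \<noteq> 0 \<Longrightarrow> u = Wm 1" for u
  proof -
    assume nz: "c0 u \<noteq> 0"
    obtain i where i: "u = Wm i" using onlyWm[OF nz] by blast
    have "u \<in> verts FF" using nz csW[of 0] unfolding c0_def Wsp_def by blast
    then have ib: "1 \<le> i" "i \<le> ?m" using i by auto
    have "?LA (Gv v1) c0 u \<noteq> 0" using nz c0fix by simp
    from lin_act_nz[OF this] obtain w where "(?GA w (Gv v1) u :: 'k) \<noteq> 0" by blast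
    then have "phiV_x E x u = v1" using gen_act_Gv_cases by metis
    then have "i = 1" using phiV_Wm_inj[OF ib, of 1] m_pos i unfolding v1_def by simp
    then show ?thesis using i by simp
  qed
  define a where "a = c0 (Wm 1)"
  have c0eq: "c0 = (\<lambda>u. a * b 0 u)"
  proof
    fix u show "c0 u = a * b 0 u"
      using only1[of u] unfolding a_def b0 bvec_def by (cases "u = Wm 1") auto
  qed
  have csall: "cs t = (\<lambda>u. a * b t u)" for t
  proof (induction t)
    case 0 then show ?case using c0eq c0_def by simp
  next
    case (Suc t)
    show ?case unfolding cs_step Suc lin_act_smult bstep ..
  qed
  have hWm: "h (bvec (Wm i)) = (\<lambda>u. a * bvec (Wm i) u)" if "1 \<le> i" "i \<le> ?m" for i
  proof -
    have "(i - 1) mod ?m + 1 = i" using that by simp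
    then have "bvec (Wm i) = b (i - 1)" unfolding b_def by simp
    then show ?thesis using csall[of "i - 1"] unfolding cs_def by simp
  qed
  have hWb: "\<forall>i y. length y = n \<longrightarrow> Wb i y \<in> verts FF \<longrightarrow> h (bvec (Wb i y)) = (\<lambda>u. a * bvec (Wb i y) u)" for n
  proof (induction n rule: less_induct)
    case (less n)
    show ?case
    proof (intro allI impI)
      fix i y assume ly: "length y = n" and wv: "Wb i y \<in> verts FF"
      then have y: "y \<in> Xset E sp x i" and i: "1 \<le> i" "i \<le> ?m" by auto
      define p where "p = (if length y = 1 then Wm i else Wb i (butlast y))"
      obtain g where g: "g \<in> gens E" "(?GA p g :: _ \<Rightarrow> 'k) = bvec (Wb i y)"
        using parent_step[OF y i] unfolding p_def by blast
      have pv: "p \<in> verts FF" using edge_src_in[of "Fb i y"] y i unfolding p_def by simp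
      have hp: "h (bvec p) = (\<lambda>u. a * bvec p u)"
      proof (cases "length y = 1")
        case True then show ?thesis using hWm i unfolding p_def by simp
      next
        case False
        have "y \<noteq> []" using Xset_ne y by blast
        then have "length (butlast y) < n" using ly by (cases y) auto
        then show ?thesis using less.IH pv False unfolding p_def by simp
      qed
      have "h (bvec (Wb i y)) = h (?LA g (bvec p))" using g(2) by (simp add: lin_act_bvec)
      also have "\<dots> = ?LA g (h (bvec p))" using hcomm[OF g(1) bvec_Wsp[OF pv]] .
      also have "\<dots> = (\<lambda>u. a * ?LA g (bvec p) u)" unfolding hp lin_act_smult ..
      also have "\<dots> = (\<lambda>u. a * bvec (Wb i y) u)" using g(2) by (simp add: lin_act_bvec)
      finally show "h (bvec (Wb i y)) = (\<lambda>u. a * bvec (Wb i y) u)" .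
    qed
  qed
  have hv: "h (bvec w) = (\<lambda>u. a * bvec w u)" if "w \<in> verts FF" for w
  proof (cases w)
    case (Wm i) then show ?thesis using hWm that by simp
  next
    case (Wb i y) then show ?thesis using hWb that by blast
  qed
  have h0: "h 0 = 0"
  proof -
    have "h (\<lambda>u. 0 * (0::'e fvert \<Rightarrow> 'k) u) = (\<lambda>u. 0 * h 0 u)" using hsm[OF zero_Wsp] .
    then show ?thesis by (simp add: zero_fun_def)
  qed
  have hsum: "finite S \<Longrightarrow> S \<subseteq> verts FF \<Longrightarrow>
      (\<Sum>w\<in>S. (\<lambda>u. k w * bvec w u)) \<in> Wsp FF \<and>
      h (\<Sum>w\<in>S. (\<lambda>u. k w * bvec w u)) = (\<lambda>u. a * (\<Sum>w\<in>S. (\<lambda>u. k w * bvec w u)) u)" for S k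
  proof (induction S rule: finite_induct)
    case empty then show ?case using h0 zero_Wsp by (simp add: zero_fun_def)
  next
    case (insert w S)
    have wv: "w \<in> verts FF" using insert by simp
    have t1: "(\<lambda>u. k w * bvec w u) \<in> Wsp FF" using Wsp_smult[OF bvec_Wsp[OF wv]] .
    have IH: "(\<Sum>w\<in>S. (\<lambda>u. k w * bvec w u)) \<in> Wsp FF"
        "h (\<Sum>w\<in>S. (\<lambda>u. k w * bvec w u)) = (\<lambda>u. a * (\<Sum>w\<in>S. (\<lambda>u. k w * bvec w u)) u)"
      using insert by auto
    have ht1: "h (\<lambda>u. k w * bvec w u) = (\<lambda>u. a * (k w * bvec w u))"
      using hsm[OF bvec_Wsp[OF wv], of "k w"] hv[OF wv] by (simp add: mult.left_commute)
    have seq: "(\<Sum>w\<in>insert w S. (\<lambda>u. k w * bvec w u)) = (\<lambda>u. k w * bvec w u) + (\<Sum>w\<in>S. (\<lambda>u. k w * bvec w u))"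
      using insert by simp
    have hs: "h ((\<lambda>u. k w * bvec w u) + (\<Sum>w\<in>S. (\<lambda>u. k w * bvec w u)))
        = (\<lambda>u. a * ((\<lambda>u. k w * bvec w u) + (\<Sum>w\<in>S. (\<lambda>u. k w * bvec w u))) u)"
      using hadd[OF t1 IH(1)] ht1 IH(2) by (simp add: fun_eq_iff distrib_left)
    show ?case unfolding seq using Wsp_plus[OF t1 IH(1)] hs by blast
  qed
  have "\<forall>c\<in>Wsp FF. h c = (\<lambda>u. a * c u)"
  proof
    fix c :: "'e fvert \<Rightarrow> 'k" assume c: "c \<in> Wsp FF"
    let ?S = "{w. c w \<noteq> 0}"
    have S: "finite ?S" "?S \<subseteq> verts FF" using c unfolding Wsp_def by auto
    have ceq: "c = (\<Sum>w\<in>?S. (\<lambda>u. c w * bvec w u))"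
    proof
      fix u
      have "(\<Sum>w\<in>?S. (\<lambda>u. c w * bvec w u)) u = (\<Sum>w\<in>?S. c w * bvec w u)" by (rule sum_fun_apply')
      also have "\<dots> = (\<Sum>w\<in>?S. if u = w then c w else 0)" by (rule sum.cong) (auto simp: bvec_def)
      also have "\<dots> = (if u \<in> ?S then c u else 0)" using S(1) by (simp add: sum.delta')
      also have "\<dots> = c u" by auto
      finally show "c u = (\<Sum>w\<in>?S. (\<lambda>u. c w * bvec w u)) u" by simp
    qed
    show "h c = (\<lambda>u. a * c u)" using hsum[OF S, of c] ceq by metis
  qed
  then show ?thesis by blast
qed


lemma End_iso:
  "\<exists>\<Phi> :: 'k::field \<Rightarrow> (('e fvert \<Rightarrow> 'k) \<Rightarrow> ('e fvert \<Rightarrow> 'k)).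
      ring_iso_to_End FF (End_mod E sp FF (phiV_x E x) (phiE_x x)) \<Phi>"
proof -
  let ?End = "End_mod E sp FF (phiV_x E x) (phiE_x x) :: (('e fvert \<Rightarrow> 'k) \<Rightarrow> ('e fvert \<Rightarrow> 'k)) set"
  let ?LA = "lin_act E sp FF (phiV_x E x) (phiE_x x)"
  define \<Phi> :: "'k \<Rightarrow> (('e fvert \<Rightarrow> 'k) \<Rightarrow> ('e fvert \<Rightarrow> 'k))"
    where "\<Phi> a = (\<lambda>c. if c \<in> Wsp FF then (\<lambda>u. a * c u) else undefined)" for a
  have inEnd: "\<Phi> a \<in> ?End" for a
    unfolding End_mod_def mem_Collect_eq
  proof (intro conjI ballI allI impI)
    fix c :: "'e fvert \<Rightarrow> 'k" assume c: "c \<in> Wsp FF"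
    show "\<Phi> a c \<in> Wsp FF" unfolding \<Phi>_def using c Wsp_smult by simp
    fix d :: "'e fvert \<Rightarrow> 'k" assume d: "d \<in> Wsp FF"
    show "\<Phi> a (c + d) = \<Phi> a c + \<Phi> a d"
      unfolding \<Phi>_def using c d Wsp_plus[OF c d] by (simp add: fun_eq_iff distrib_left)
  next
    fix b and c :: "'e fvert \<Rightarrow> 'k" assume c: "c \<in> Wsp FF"
    show "\<Phi> a (\<lambda>u. b * c u) = (\<lambda>u. b * \<Phi> a c u)"
      unfolding \<Phi>_def using c Wsp_smult[OF c, of b] by (simp add: mult.left_commute)
  next
    fix g and c :: "'e fvert \<Rightarrow> 'k" assume g: "g \<in> gens E" and c: "c \<in> Wsp FF"
    show "\<Phi> a (?LA g c) = ?LA g (\<Phi> a c)"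
      unfolding \<Phi>_def using c lin_act_Wsp[OF c, of g] by (simp add: lin_act_smult)
  next
    fix c :: "'e fvert \<Rightarrow> 'k" assume "c \<notin> Wsp FF"
    then show "\<Phi> a c = undefined" unfolding \<Phi>_def by simp
  qed
  have w1: "(bvec (Wm 1) :: 'e fvert \<Rightarrow> 'k) \<in> Wsp FF" using bvec_Wsp[of "Wm 1" FF] m_pos by (simp add: Suc_le_eq)
  have inj: "inj_on \<Phi> UNIV"
  proof (rule inj_onI)
    fix a b assume ab: "\<Phi> a = \<Phi> b"
    have e: "\<And>a. \<Phi> a (bvec (Wm 1)) = (\<lambda>u. a * bvec (Wm 1) u)" using w1 unfolding \<Phi>_def by simp
    have "\<Phi> a (bvec (Wm 1)) = \<Phi> b (bvec (Wm 1))" using ab by simp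
    then have "(\<lambda>u. a * bvec (Wm 1) u) = (\<lambda>u::'e fvert. b * bvec (Wm 1) u)" unfolding e .
    then have "a * bvec (Wm 1) (Wm 1 :: 'e fvert) = b * bvec (Wm 1) (Wm 1 :: 'e fvert)" by (rule fun_cong)
    then show "a = b" by (simp add: bvec_def)
  qed
  have img: "\<Phi> ` UNIV = ?End"
  proof
    show "\<Phi> ` UNIV \<subseteq> ?End" using inEnd by blast
    show "?End \<subseteq> \<Phi> ` UNIV"
    proof
      fix h assume h: "h \<in> ?End"
      obtain a where a: "\<forall>c\<in>Wsp FF. h c = (\<lambda>u. a * c u)" using End_scalar[OF h] by blast
      have "h = \<Phi> a"
      proof
        fix c show "h c = \<Phi> a c"
        proof (cases "c \<in> Wsp FF")
          case True then show ?thesis using a unfolding \<Phi>_def by simp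
        next
          case False then show ?thesis using h unfolding \<Phi>_def End_mod_def by simp
        qed
      qed
      then show "h \<in> \<Phi> ` UNIV" by blast
    qed
  qed
  have "ring_iso_to_End FF ?End \<Phi>"
    unfolding ring_iso_to_End_def
  proof (intro conjI allI ballI)
    show "bij_betw \<Phi> UNIV ?End" unfolding bij_betw_def using inj img by blast
    fix a b :: 'k and c :: "'e fvert \<Rightarrow> 'k" assume c: "c \<in> Wsp FF"
    show "\<Phi> (a + b) c = \<Phi> a c + \<Phi> b c" unfolding \<Phi>_def using c by (simp add: fun_eq_iff distrib_right)
    show "\<Phi> (a * b) c = \<Phi> a (\<Phi> b c)" unfolding \<Phi>_def using c Wsp_smult[OF c, of b] by (simp add: mult.assoc)
  next
    fix c :: "'e fvert \<Rightarrow> 'k" assume c: "c \<in> Wsp FF"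
    show "\<Phi> 1 c = c" unfolding \<Phi>_def using c by simp
  qed
  then show ?thesis by blast
qed

end

theorem theorem6p1:
  fixes E :: "('v,'e) dgraph" and sp :: "'v \<Rightarrow> 'e" and x :: "'e list"
  assumes "wf_graph E" and "row_finite E" and "special_choice E sp"
    and "is_cycle E x" and "\<forall>e\<in>set x. special E sp e" and "has_exit E x"
  shows "\<not> simple_module E sp (Fx E sp x) (phiV_x E x) (phiE_x x) TYPE('k::field)
     \<and> (\<exists>\<Phi> :: 'k \<Rightarrow> ((_ \<Rightarrow> 'k) \<Rightarrow> (_ \<Rightarrow> 'k)).
          ring_iso_to_End (Fx E sp x) (End_mod E sp (Fx E sp x) (phiV_x E x) (phiE_x x)) \<Phi>)"
  by (rule conjI[OF not_simple[OF assms(1-5) assms(6)] End_iso[OF assms(1-5)]])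

end
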